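(* Let $M$ be a right $R$-module with $S=\mathrm{End}_R(M)$. Consider the statements: (i) $M$ is an abelian Rickart module; (ii) $M$ is a centrally endo-AIP module; (iii) $M$ is an endo-AIP module. Then (i) $\Rightarrow$ (ii) and (ii) $\Rightarrow$ (iii). Neither converse holds in general: there exist modules satisfying (ii) but not (i), and modules satisfying (iii) but not (ii).
   Context: Rings are associative with identity; modules are unitary right modules. For $N\le M$, $l_S(N)=\{\phi\in S:\phi(N)=0\}$. A submodule $N$ is fully invariant if $\phi(N)\subseteq N$ for all $\phi\in S$. An ideal $I$ of a ring $A$ is right s-unital if for every $a\in I$ there is $x\in I$ with $ax=a$; it is centrally s-unital if for every $a\in I$ there is an element $z\in I$ central in $A$ with $az=a$. $M$ is centrally endo-AIP if $l_S(N)$ is a centrally s-unital ideal of $S$ for every fully invariant submodule $N$ of $M$; $M$ is endo-AIP if $l_S(N)$ is a right s-unital ideal of $S$ for every fully invariant submodule $N$. $M$ is Rickart if $\ker\phi$ is a direct summand of $M$ for every $\phi\in S$; $M$ is abelian if every idempotent of $S$ is central in $S$. *)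

theory Defs
  imports Complex_Main "HOL-Algebra.Ring" "HOL-Algebra.Ideal" "HOL-Algebra.Module" "HOL-Library.FuncSet"
begin

text \<open>We reuse the HOL-Algebra record type ('a,'b) module, but read
  the scalar action  smult M a x  as the RIGHT action  x a.\<close>

definition rsm :: "('a, 'b, 'c) module_scheme \<Rightarrow> 'b \<Rightarrow> 'a \<Rightarrow> 'b"
  where "rsm M x a = smult M a x"

definition right_module :: "('a, 'c) ring_scheme \<Rightarrow> ('a, 'b, 'd) module_scheme \<Rightarrow> bool" where
  "right_module R M \<longleftrightarrow> ring R \<and> abelian_group M \<and>
     (\<forall>a\<in>carrier R. \<forall>x\<in>carrier M. rsm M x a \<in> carrier M) \<and>
     (\<forall>a\<in>carrier R. \<forall>x\<in>carrier M. \<forall>y\<in>carrier M.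
         rsm M (x \<oplus>\<^bsub>M\<^esub> y) a = rsm M x a \<oplus>\<^bsub>M\<^esub> rsm M y a) \<and>
     (\<forall>a\<in>carrier R. \<forall>b\<in>carrier R. \<forall>x\<in>carrier M.
         rsm M x (a \<oplus>\<^bsub>R\<^esub> b) = rsm M x a \<oplus>\<^bsub>M\<^esub> rsm M x b) \<and>
     (\<forall>a\<in>carrier R. \<forall>b\<in>carrier R. \<forall>x\<in>carrier M.
         rsm M x (a \<otimes>\<^bsub>R\<^esub> b) = rsm M (rsm M x a) b) \<and>
     (\<forall>x\<in>carrier M. rsm M x \<one>\<^bsub>R\<^esub> = x)"

definition rsubmodule :: "('a, 'c) ring_scheme \<Rightarrow> 'b set \<Rightarrow> ('a, 'b, 'd) module_scheme \<Rightarrow> bool" where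
  "rsubmodule R N M \<longleftrightarrow> N \<subseteq> carrier M \<and> additive_subgroup N M \<and>
     (\<forall>a\<in>carrier R. \<forall>x\<in>N. rsm M x a \<in> N)"

definition End :: "('a, 'c) ring_scheme \<Rightarrow> ('a, 'b, 'd) module_scheme \<Rightarrow> ('b \<Rightarrow> 'b) set" where
  "End R M = {f. f \<in> extensional (carrier M) \<and> f \<in> carrier M \<rightarrow> carrier M \<and>
      (\<forall>x\<in>carrier M. \<forall>y\<in>carrier M. f (x \<oplus>\<^bsub>M\<^esub> y) = f x \<oplus>\<^bsub>M\<^esub> f y) \<and>
      (\<forall>a\<in>carrier R. \<forall>x\<in>carrier M. f (rsm M x a) = rsm M (f x) a)}"

definition End_ring :: "('a, 'c) ring_scheme \<Rightarrow> ('a, 'b, 'd) module_scheme \<Rightarrow> ('b \<Rightarrow> 'b) ring" where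
  "End_ring R M = \<lparr> carrier = End R M,
      mult = (\<lambda>f g. compose (carrier M) f g),
      one = (\<lambda>x\<in>carrier M. x),
      zero = (\<lambda>x\<in>carrier M. \<zero>\<^bsub>M\<^esub>),
      add = (\<lambda>f g. \<lambda>x\<in>carrier M. f x \<oplus>\<^bsub>M\<^esub> g x) \<rparr>"

definition fully_invariant :: "('a, 'c) ring_scheme \<Rightarrow> 'b set \<Rightarrow> ('a, 'b, 'd) module_scheme \<Rightarrow> bool" where
  "fully_invariant R N M \<longleftrightarrow> rsubmodule R N M \<and> (\<forall>\<phi>\<in>End R M. \<phi> ` N \<subseteq> N)"

definition lann :: "('a, 'c) ring_scheme \<Rightarrow> ('a, 'b, 'd) module_scheme \<Rightarrow> 'b set \<Rightarrow> ('b \<Rightarrow> 'b) set" where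
  "lann R M N = {\<phi> \<in> End R M. \<forall>x\<in>N. \<phi> x = \<zero>\<^bsub>M\<^esub>}"

definition right_s_unital_ideal :: "'e set \<Rightarrow> ('e, 'f) ring_scheme \<Rightarrow> bool" where
  "right_s_unital_ideal I A \<longleftrightarrow> ideal I A \<and> (\<forall>a\<in>I. \<exists>x\<in>I. a \<otimes>\<^bsub>A\<^esub> x = a)"

definition centrally_s_unital_ideal :: "'e set \<Rightarrow> ('e, 'f) ring_scheme \<Rightarrow> bool" where
  "centrally_s_unital_ideal I A \<longleftrightarrow> ideal I A \<and>
     (\<forall>a\<in>I. \<exists>z\<in>I. (\<forall>s\<in>carrier A. z \<otimes>\<^bsub>A\<^esub> s = s \<otimes>\<^bsub>A\<^esub> z) \<and> a \<otimes>\<^bsub>A\<^esub> z = a)"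

definition centrally_endo_AIP :: "('a, 'c) ring_scheme \<Rightarrow> ('a, 'b, 'd) module_scheme \<Rightarrow> bool" where
  "centrally_endo_AIP R M \<longleftrightarrow>
     (\<forall>N. fully_invariant R N M \<longrightarrow> centrally_s_unital_ideal (lann R M N) (End_ring R M))"

definition endo_AIP :: "('a, 'c) ring_scheme \<Rightarrow> ('a, 'b, 'd) module_scheme \<Rightarrow> bool" where
  "endo_AIP R M \<longleftrightarrow>
     (\<forall>N. fully_invariant R N M \<longrightarrow> right_s_unital_ideal (lann R M N) (End_ring R M))"

definition direct_summand :: "('a, 'c) ring_scheme \<Rightarrow> 'b set \<Rightarrow> ('a, 'b, 'd) module_scheme \<Rightarrow> bool" where
  "direct_summand R N M \<longleftrightarrow> rsubmodule R N M \<and>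
     (\<exists>K. rsubmodule R K M \<and> N \<inter> K = {\<zero>\<^bsub>M\<^esub>} \<and>
          carrier M = {x \<oplus>\<^bsub>M\<^esub> y | x y. x \<in> N \<and> y \<in> K})"

definition rickart :: "('a, 'c) ring_scheme \<Rightarrow> ('a, 'b, 'd) module_scheme \<Rightarrow> bool" where
  "rickart R M \<longleftrightarrow>
     (\<forall>\<phi>\<in>End R M. direct_summand R {x \<in> carrier M. \<phi> x = \<zero>\<^bsub>M\<^esub>} M)"

definition abelian_module :: "('a, 'c) ring_scheme \<Rightarrow> ('a, 'b, 'd) module_scheme \<Rightarrow> bool" where
  "abelian_module R M \<longleftrightarrow>
     (\<forall>e\<in>carrier (End_ring R M). e \<otimes>\<^bsub>End_ring R M\<^esub> e = e \<longrightarrow>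
        (\<forall>s\<in>carrier (End_ring R M). e \<otimes>\<^bsub>End_ring R M\<^esub> s = s \<otimes>\<^bsub>End_ring R M\<^esub> e))"

end

theory Submission
  imports Defs
begin

lemma End_ring_simps[simp]:
  "carrier (End_ring R M) = End R M"
  "mult (End_ring R M) = (\<lambda>f g. compose (carrier M) f g)"
  "one (End_ring R M) = (\<lambda>x\<in>carrier M. x)"
  "zero (End_ring R M) = (\<lambda>x\<in>carrier M. \<zero>\<^bsub>M\<^esub>)"
  "add (End_ring R M) = (\<lambda>f g. \<lambda>x\<in>carrier M. f x \<oplus>\<^bsub>M\<^esub> g x)"
  by (simp_all add: End_ring_def)

lemma add_subgroupI':
  assumes "abelian_group M" "N \<subseteq> carrier M" "\<zero>\<^bsub>M\<^esub> \<in> N"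
    "\<And>x y. x \<in> N \<Longrightarrow> y \<in> N \<Longrightarrow> x \<oplus>\<^bsub>M\<^esub> y \<in> N"
    "\<And>x. x \<in> N \<Longrightarrow> \<ominus>\<^bsub>M\<^esub> x \<in> N"
  shows "additive_subgroup N M"
  apply (rule additive_subgroupI)
  apply (rule subgroup.intro)
  using assms by (auto simp flip: a_inv_def)

context
  fixes R :: "'r ring" and M :: "('r,'m) module"
  assumes RM: "right_module R M"
begin

interpretation M: abelian_group M using RM unfolding right_module_def by blast
interpretation R: ring R using RM unfolding right_module_def by blast

lemma rsm_closed: "a \<in> carrier R \<Longrightarrow> x \<in> carrier M \<Longrightarrow> rsm M x a \<in> carrier M"
  using RM unfolding right_module_def by blast
lemma rsm_add: "a \<in> carrier R \<Longrightarrow> x \<in> carrier M \<Longrightarrow> y \<in> carrier M \<Longrightarrow>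
   rsm M (x \<oplus>\<^bsub>M\<^esub> y) a = rsm M x a \<oplus>\<^bsub>M\<^esub> rsm M y a"
  using RM unfolding right_module_def by blast
lemma rsm_mult: "a \<in> carrier R \<Longrightarrow> b \<in> carrier R \<Longrightarrow> x \<in> carrier M \<Longrightarrow>
   rsm M x (a \<otimes>\<^bsub>R\<^esub> b) = rsm M (rsm M x a) b"
  using RM unfolding right_module_def by blast
lemma rsm_one: "x \<in> carrier M \<Longrightarrow> rsm M x \<one>\<^bsub>R\<^esub> = x"
  using RM unfolding right_module_def by blast

lemma rsm_zero: "a \<in> carrier R \<Longrightarrow> rsm M \<zero>\<^bsub>M\<^esub> a = \<zero>\<^bsub>M\<^esub>"
proof -
  assume a: "a \<in> carrier R"
  have c: "rsm M \<zero>\<^bsub>M\<^esub> a \<in> carrier M" using a rsm_closed by simp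
  have "rsm M \<zero>\<^bsub>M\<^esub> a \<oplus>\<^bsub>M\<^esub> rsm M \<zero>\<^bsub>M\<^esub> a = rsm M \<zero>\<^bsub>M\<^esub> a \<oplus>\<^bsub>M\<^esub> \<zero>\<^bsub>M\<^esub>"
    using rsm_add[OF a M.zero_closed M.zero_closed] c by simp
  then show ?thesis using c M.add.l_cancel_one[OF c c] by simp
qed

lemma rsm_neg: "a \<in> carrier R \<Longrightarrow> x \<in> carrier M \<Longrightarrow> rsm M (\<ominus>\<^bsub>M\<^esub> x) a = \<ominus>\<^bsub>M\<^esub> rsm M x a"
proof -
  assume a: "a \<in> carrier R" and x: "x \<in> carrier M"
  have "rsm M (\<ominus>\<^bsub>M\<^esub> x) a \<oplus>\<^bsub>M\<^esub> rsm M x a = \<zero>\<^bsub>M\<^esub>"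
    using rsm_add[OF a M.a_inv_closed[OF x] x] x a rsm_zero by (simp add: M.l_neg)
  then show ?thesis using M.minus_equality a x rsm_closed by (metis M.a_inv_closed)
qed

lemma End_closed: "f \<in> End R M \<Longrightarrow> x \<in> carrier M \<Longrightarrow> f x \<in> carrier M"
  unfolding End_def by blast
lemma End_add: "f \<in> End R M \<Longrightarrow> x \<in> carrier M \<Longrightarrow> y \<in> carrier M \<Longrightarrow> f (x \<oplus>\<^bsub>M\<^esub> y) = f x \<oplus>\<^bsub>M\<^esub> f y"
  unfolding End_def by blast
lemma End_rsm: "f \<in> End R M \<Longrightarrow> a \<in> carrier R \<Longrightarrow> x \<in> carrier M \<Longrightarrow> f (rsm M x a) = rsm M (f x) a"
  unfolding End_def by blast
lemma End_ext: "f \<in> End R M \<Longrightarrow> f \<in> extensional (carrier M)"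
  unfolding End_def by blast
lemma End_zero: "f \<in> End R M \<Longrightarrow> f \<zero>\<^bsub>M\<^esub> = \<zero>\<^bsub>M\<^esub>"
proof -
  assume f: "f \<in> End R M"
  have c: "f \<zero>\<^bsub>M\<^esub> \<in> carrier M" using f End_closed by simp
  have "f \<zero>\<^bsub>M\<^esub> \<oplus>\<^bsub>M\<^esub> f \<zero>\<^bsub>M\<^esub> = f \<zero>\<^bsub>M\<^esub> \<oplus>\<^bsub>M\<^esub> \<zero>\<^bsub>M\<^esub>"
    using End_add[OF f M.zero_closed M.zero_closed] c by simp
  then show ?thesis using c M.add.l_cancel_one[OF c c] by simp
qed
lemma End_neg: "f \<in> End R M \<Longrightarrow> x \<in> carrier M \<Longrightarrow> f (\<ominus>\<^bsub>M\<^esub> x) = \<ominus>\<^bsub>M\<^esub> f x"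
proof -
  assume f: "f \<in> End R M" and x: "x \<in> carrier M"
  have "f (\<ominus>\<^bsub>M\<^esub> x) \<oplus>\<^bsub>M\<^esub> f x = \<zero>\<^bsub>M\<^esub>"
    using End_add[OF f M.a_inv_closed[OF x] x] x End_zero[OF f] by (simp add: M.l_neg)
  then show ?thesis using M.minus_equality f x End_closed by (metis M.a_inv_closed)
qed

lemma End_eqI: "f \<in> End R M \<Longrightarrow> g \<in> End R M \<Longrightarrow> (\<And>x. x \<in> carrier M \<Longrightarrow> f x = g x) \<Longrightarrow> f = g"
  by (rule extensionalityI[OF End_ext End_ext])

lemma End_compose: "f \<in> End R M \<Longrightarrow> g \<in> End R M \<Longrightarrow> compose (carrier M) f g \<in> End R M"
  unfolding End_def using rsm_closed M.a_closed by (auto simp: compose_def Pi_iff)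

lemma End_id: "(\<lambda>x\<in>carrier M. x) \<in> End R M"
  unfolding End_def using rsm_closed M.a_closed by auto

lemma End_0: "(\<lambda>x\<in>carrier M. \<zero>\<^bsub>M\<^esub>) \<in> End R M"
  unfolding End_def using rsm_closed M.a_closed rsm_zero by auto

lemma End_plus: "f \<in> End R M \<Longrightarrow> g \<in> End R M \<Longrightarrow> (\<lambda>x\<in>carrier M. f x \<oplus>\<^bsub>M\<^esub> g x) \<in> End R M"
  unfolding End_def using rsm_closed M.a_closed rsm_add
  by (auto simp: Pi_iff M.a_ac)

lemma End_uminus: "f \<in> End R M \<Longrightarrow> (\<lambda>x\<in>carrier M. \<ominus>\<^bsub>M\<^esub> f x) \<in> End R M"
  unfolding End_def using rsm_closed M.a_closed rsm_neg
  by (auto simp: Pi_iff M.minus_add)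

lemma End_ring_ring: "ring (End_ring R M)"
  apply (rule ringI)
     apply (rule abelian_groupI)
          apply (simp_all add: End_plus End_0 End_compose End_id)
  subgoal by (rule restrict_ext) (simp add: M.a_assoc End_closed)
  subgoal by (rule restrict_ext) (simp add: M.a_comm End_closed)
  subgoal for f by (rule extensionalityI[OF restrict_extensional End_ext]) (auto simp: End_closed)
  subgoal for f by (rule bexI[of _ "\<lambda>x\<in>carrier M. \<ominus>\<^bsub>M\<^esub> f x"]) 
        (auto intro!: restrict_ext simp: End_uminus End_closed M.l_neg)
  subgoal
    apply (rule monoidI)
        apply (simp_all add: End_compose End_id)
    subgoal for f g h by (rule compose_assoc[symmetric]) (auto simp: End_closed)
    subgoal for f by (rule Id_compose) (auto simp: End_closed End_ext)
    subgoal for f by (rule compose_Id) (auto simp: End_closed End_ext)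
    done
  subgoal for f g h by (auto intro!: restrict_ext simp: compose_def End_closed)
  subgoal for f g h by (auto intro!: restrict_ext simp: compose_def End_closed End_add)
  done

lemma lann_ideal:
  assumes FI: "fully_invariant R N M"
  shows "ideal (lann R M N) (End_ring R M)"
proof -
  have Nsub: "N \<subseteq> carrier M" using FI unfolding fully_invariant_def rsubmodule_def by blast
  have inv: "\<And>\<phi> x. \<phi> \<in> End R M \<Longrightarrow> x \<in> N \<Longrightarrow> \<phi> x \<in> N"
    using FI unfolding fully_invariant_def by blast
  interpret S: ring "End_ring R M" by (rule End_ring_ring)
  have lc: "\<And>a x. a \<in> lann R M N \<Longrightarrow> x \<in> carrier (End_ring R M) \<Longrightarrow> x \<otimes>\<^bsub>End_ring R M\<^esub> a \<in> lann R M N"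
    using Nsub by (auto simp: lann_def End_compose compose_eq End_zero)
  have rc: "\<And>a x. a \<in> lann R M N \<Longrightarrow> x \<in> carrier (End_ring R M) \<Longrightarrow> a \<otimes>\<^bsub>End_ring R M\<^esub> x \<in> lann R M N"
    using Nsub inv by (auto simp: lann_def End_compose compose_eq)
  show ?thesis
  proof (rule idealI[OF End_ring_ring])
    show "subgroup (lann R M N) (add_monoid (End_ring R M))"
    proof (rule subgroup.intro)
      show "lann R M N \<subseteq> carrier (add_monoid (End_ring R M))" by (auto simp: lann_def)
      show "\<And>x y. x \<in> lann R M N \<Longrightarrow> y \<in> lann R M N \<Longrightarrow> x \<otimes>\<^bsub>add_monoid (End_ring R M)\<^esub> y \<in> lann R M N"
        using Nsub by (auto simp: lann_def End_plus)
      show "\<one>\<^bsub>add_monoid (End_ring R M)\<^esub> \<in> lann R M N"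
        using Nsub by (auto simp: lann_def End_0)
      fix a assume a: "a \<in> lann R M N"
      have aS: "a \<in> carrier (End_ring R M)" using a by (auto simp: lann_def)
      have e: "(\<ominus>\<^bsub>End_ring R M\<^esub> \<one>\<^bsub>End_ring R M\<^esub>) \<otimes>\<^bsub>End_ring R M\<^esub> a = \<ominus>\<^bsub>End_ring R M\<^esub> a"
        using aS S.l_minus S.l_one S.one_closed by metis
      have "\<ominus>\<^bsub>End_ring R M\<^esub> a \<in> lann R M N" using lc[OF a, of "\<ominus>\<^bsub>End_ring R M\<^esub> \<one>\<^bsub>End_ring R M\<^esub>"] e
        S.a_inv_closed S.one_closed by metis
      then show "inv\<^bsub>add_monoid (End_ring R M)\<^esub> a \<in> lann R M N" by (simp only: a_inv_def)
    qed
  qed (use lc rc in simp_all)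
qed

lemma rsub_facts:
  assumes "rsubmodule R A M"
  shows "A \<subseteq> carrier M" "\<zero>\<^bsub>M\<^esub> \<in> A" "\<And>x y. x \<in> A \<Longrightarrow> y \<in> A \<Longrightarrow> x \<oplus>\<^bsub>M\<^esub> y \<in> A"
    "\<And>x. x \<in> A \<Longrightarrow> \<ominus>\<^bsub>M\<^esub> x \<in> A" "\<And>x a. x \<in> A \<Longrightarrow> a \<in> carrier R \<Longrightarrow> rsm M x a \<in> A"
  using assms unfolding rsubmodule_def
  by (auto intro: additive_subgroup.a_closed additive_subgroup.zero_closed additive_subgroup.a_inv_closed)

lemma decomp_unique:
  assumes A: "rsubmodule R A M" and K: "rsubmodule R K M" and AK: "A \<inter> K = {\<zero>\<^bsub>M\<^esub>}"
    and "a \<in> A" "k \<in> K" "a' \<in> A" "k' \<in> K" "a \<oplus>\<^bsub>M\<^esub> k = a' \<oplus>\<^bsub>M\<^esub> k'"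
  shows "k = k'"
proof -
  note fA = rsub_facts[OF A] and fK = rsub_facts[OF K]
  have c: "a \<in> carrier M" "k \<in> carrier M" "a' \<in> carrier M" "k' \<in> carrier M"
    using assms fA(1) fK(1) by auto
  have "k' \<oplus>\<^bsub>M\<^esub> \<ominus>\<^bsub>M\<^esub> k = \<ominus>\<^bsub>M\<^esub> a' \<oplus>\<^bsub>M\<^esub> a"
  proof -
    have "\<ominus>\<^bsub>M\<^esub> a' \<oplus>\<^bsub>M\<^esub> a = \<ominus>\<^bsub>M\<^esub> a' \<oplus>\<^bsub>M\<^esub> (a \<oplus>\<^bsub>M\<^esub> k) \<oplus>\<^bsub>M\<^esub> \<ominus>\<^bsub>M\<^esub> k"
      using c by (simp add: M.a_assoc M.r_neg)
    also have "\<dots> = \<ominus>\<^bsub>M\<^esub> a' \<oplus>\<^bsub>M\<^esub> (a' \<oplus>\<^bsub>M\<^esub> k') \<oplus>\<^bsub>M\<^esub> \<ominus>\<^bsub>M\<^esub> k"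
      using assms by simp
    also have "\<dots> = k' \<oplus>\<^bsub>M\<^esub> \<ominus>\<^bsub>M\<^esub> k"
      using c by (simp add: M.a_assoc[symmetric] M.l_neg)
    finally show ?thesis by simp
  qed
  moreover have "k' \<oplus>\<^bsub>M\<^esub> \<ominus>\<^bsub>M\<^esub> k \<in> K" using fK assms by auto
  moreover have "\<ominus>\<^bsub>M\<^esub> a' \<oplus>\<^bsub>M\<^esub> a \<in> A" using fA assms by auto
  ultimately have "k' \<oplus>\<^bsub>M\<^esub> \<ominus>\<^bsub>M\<^esub> k = \<zero>\<^bsub>M\<^esub>" using AK by auto
  then show ?thesis using c by (metis M.add.inv_equality M.minus_minus M.a_inv_closed M.minus_equality)
qed

lemma proj_exists:
  assumes A: "rsubmodule R A M" and K: "rsubmodule R K M" and AK: "A \<inter> K = {\<zero>\<^bsub>M\<^esub>}"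
    and sum: "carrier M = {x \<oplus>\<^bsub>M\<^esub> y | x y. x \<in> A \<and> y \<in> K}"
  shows "\<exists>q\<in>End R M. (\<forall>x\<in>A. q x = \<zero>\<^bsub>M\<^esub>) \<and> (\<forall>x\<in>carrier M. \<exists>a\<in>A. x = a \<oplus>\<^bsub>M\<^esub> q x)
           \<and> compose (carrier M) q q = q"
proof -
  note fA = rsub_facts[OF A] and fK = rsub_facts[OF K]
  define q where "q = (\<lambda>x\<in>carrier M. THE k. k \<in> K \<and> (\<exists>a\<in>A. x = a \<oplus>\<^bsub>M\<^esub> k))"
  have qI: "q (a \<oplus>\<^bsub>M\<^esub> k) = k" if "a \<in> A" "k \<in> K" for a k
  proof -
    have "a \<oplus>\<^bsub>M\<^esub> k \<in> carrier M" using that fA(1) fK(1) by auto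
    moreover have "(THE k'. k' \<in> K \<and> (\<exists>a'\<in>A. a \<oplus>\<^bsub>M\<^esub> k = a' \<oplus>\<^bsub>M\<^esub> k')) = k"
      apply (rule the_equality)
      using that apply blast
      using that decomp_unique[OF A K AK] by metis
    ultimately show ?thesis by (simp add: q_def)
  qed
  have dec: "\<exists>a\<in>A. \<exists>k\<in>K. x = a \<oplus>\<^bsub>M\<^esub> k" if "x \<in> carrier M" for x
    using that sum by blast
  have qK: "q x \<in> K" if "x \<in> carrier M" for x
    using dec[OF that] qI by auto
  have qE: "q \<in> End R M"
    unfolding End_def
  proof (intro CollectI conjI ballI)
    show "q \<in> extensional (carrier M)" by (simp add: q_def)
    show "q \<in> carrier M \<rightarrow> carrier M" using qK fK(1) by auto
    fix x y assume x: "x \<in> carrier M" and y: "y \<in> carrier M"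
    obtain a k where ak: "a \<in> A" "k \<in> K" "x = a \<oplus>\<^bsub>M\<^esub> k" using dec[OF x] by blast
    obtain a' k' where ak': "a' \<in> A" "k' \<in> K" "y = a' \<oplus>\<^bsub>M\<^esub> k'" using dec[OF y] by blast
    have c: "a \<in> carrier M" "k \<in> carrier M" "a' \<in> carrier M" "k' \<in> carrier M"
      using ak ak' fA(1) fK(1) by auto
    have "x \<oplus>\<^bsub>M\<^esub> y = (a \<oplus>\<^bsub>M\<^esub> a') \<oplus>\<^bsub>M\<^esub> (k \<oplus>\<^bsub>M\<^esub> k')"
      using ak ak' c by (simp add: M.a_ac)
    then show "q (x \<oplus>\<^bsub>M\<^esub> y) = q x \<oplus>\<^bsub>M\<^esub> q y"
      using qI ak ak' fA fK by simp
  next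
    fix r x assume r: "r \<in> carrier R" and x: "x \<in> carrier M"
    obtain a k where ak: "a \<in> A" "k \<in> K" "x = a \<oplus>\<^bsub>M\<^esub> k" using dec[OF x] by blast
    have c: "a \<in> carrier M" "k \<in> carrier M" using ak fA(1) fK(1) by auto
    have "rsm M x r = rsm M a r \<oplus>\<^bsub>M\<^esub> rsm M k r" using ak c r rsm_add by simp
    then show "q (rsm M x r) = rsm M (q x) r"
      using qI ak fA fK r by simp
  qed
  have q0: "\<forall>x\<in>A. q x = \<zero>\<^bsub>M\<^esub>"
  proof
    fix x assume x: "x \<in> A"
    have "x = x \<oplus>\<^bsub>M\<^esub> \<zero>\<^bsub>M\<^esub>" using x fA(1) by auto
    then show "q x = \<zero>\<^bsub>M\<^esub>" using qI[OF x fK(2)] by simp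
  qed
  have qd: "\<forall>x\<in>carrier M. \<exists>a\<in>A. x = a \<oplus>\<^bsub>M\<^esub> q x"
    using dec qI by fastforce
  have qq: "compose (carrier M) q q = q"
  proof (rule End_eqI[OF End_compose[OF qE qE] qE])
    fix x assume x: "x \<in> carrier M"
    have "q x = \<zero>\<^bsub>M\<^esub> \<oplus>\<^bsub>M\<^esub> q x" using qK[OF x] fK(1) by auto
    then have "q (q x) = q x" using qI[OF fA(2) qK[OF x]] by simp
    then show "compose (carrier M) q q x = q x" using x by (simp add: compose_eq)
  qed
  show ?thesis using qE q0 qd qq by blast
qed

lemma rickart_unit:
  assumes RK: "rickart R M" and \<phi>: "\<phi> \<in> lann R M N" and Nsub: "N \<subseteq> carrier M"
  shows "\<exists>q\<in>lann R M N. compose (carrier M) q q = q \<and> compose (carrier M) \<phi> q = \<phi>"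
proof -
  have \<phi>E: "\<phi> \<in> End R M" and \<phi>N: "\<forall>x\<in>N. \<phi> x = \<zero>\<^bsub>M\<^esub>" using \<phi> by (auto simp: lann_def)
  from RK \<phi>E have "direct_summand R {x\<in>carrier M. \<phi> x = \<zero>\<^bsub>M\<^esub>} M" by (simp add: rickart_def)
  then obtain K where A: "rsubmodule R {x\<in>carrier M. \<phi> x = \<zero>\<^bsub>M\<^esub>} M" and K: "rsubmodule R K M"
    and AK: "{x\<in>carrier M. \<phi> x = \<zero>\<^bsub>M\<^esub>} \<inter> K = {\<zero>\<^bsub>M\<^esub>}"
    and sum: "carrier M = {x \<oplus>\<^bsub>M\<^esub> y | x y. x \<in> {x\<in>carrier M. \<phi> x = \<zero>\<^bsub>M\<^esub>} \<and> y \<in> K}"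
    unfolding direct_summand_def by blast
  obtain q where qE: "q \<in> End R M" and q0: "\<forall>x\<in>{x\<in>carrier M. \<phi> x = \<zero>\<^bsub>M\<^esub>}. q x = \<zero>\<^bsub>M\<^esub>"
    and qd: "\<forall>x\<in>carrier M. \<exists>a\<in>{x\<in>carrier M. \<phi> x = \<zero>\<^bsub>M\<^esub>}. x = a \<oplus>\<^bsub>M\<^esub> q x"
    and qq: "compose (carrier M) q q = q"
    using proj_exists[OF A K AK sum] by blast
  have qN: "q \<in> lann R M N" using qE q0 \<phi>N Nsub by (auto simp: lann_def)
  have "compose (carrier M) \<phi> q = \<phi>"
  proof (rule End_eqI[OF End_compose[OF \<phi>E qE] \<phi>E])
    fix x assume x: "x \<in> carrier M"
    obtain a where a: "a \<in> carrier M" "\<phi> a = \<zero>\<^bsub>M\<^esub>" "x = a \<oplus>\<^bsub>M\<^esub> q x" using qd x by blast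
    have "\<phi> x = \<phi> a \<oplus>\<^bsub>M\<^esub> \<phi> (q x)" using a x End_add[OF \<phi>E] End_closed[OF qE] by metis
    then show "compose (carrier M) \<phi> q x = \<phi> x"
      using a x End_closed[OF \<phi>E] End_closed[OF qE] by (simp add: compose_eq)
  qed
  then show ?thesis using qN qq by blast
qed

lemma part1:
  assumes ab: "abelian_module R M" and RK: "rickart R M"
  shows "centrally_endo_AIP R M"
  unfolding centrally_endo_AIP_def centrally_s_unital_ideal_def
proof (intro allI impI conjI ballI)
  fix N assume FI: "fully_invariant R N M"
  show "ideal (lann R M N) (End_ring R M)" by (rule lann_ideal[OF FI])
  have Nsub: "N \<subseteq> carrier M" using FI unfolding fully_invariant_def rsubmodule_def by blast
  fix \<phi> assume \<phi>: "\<phi> \<in> lann R M N"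
  obtain q where q: "q \<in> lann R M N" "compose (carrier M) q q = q" "compose (carrier M) \<phi> q = \<phi>"
    using rickart_unit[OF RK \<phi> Nsub] by blast
  have "q \<in> End R M" using q by (simp add: lann_def)
  then have "\<forall>s\<in>carrier (End_ring R M). q \<otimes>\<^bsub>End_ring R M\<^esub> s = s \<otimes>\<^bsub>End_ring R M\<^esub> q"
    using ab q(2) unfolding abelian_module_def by simp
  then show "\<exists>z\<in>lann R M N. (\<forall>s\<in>carrier (End_ring R M). z \<otimes>\<^bsub>End_ring R M\<^esub> s = s \<otimes>\<^bsub>End_ring R M\<^esub> z)
      \<and> \<phi> \<otimes>\<^bsub>End_ring R M\<^esub> z = \<phi>"
    using q by auto
qed

lemma rickart_endo_AIP:
  assumes RK: "rickart R M"
  shows "endo_AIP R M"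
  unfolding endo_AIP_def right_s_unital_ideal_def
proof (intro allI impI conjI ballI)
  fix N assume FI: "fully_invariant R N M"
  show "ideal (lann R M N) (End_ring R M)" by (rule lann_ideal[OF FI])
  have Nsub: "N \<subseteq> carrier M" using FI unfolding fully_invariant_def rsubmodule_def by blast
  fix \<phi> assume \<phi>: "\<phi> \<in> lann R M N"
  obtain q where q: "q \<in> lann R M N" "compose (carrier M) q q = q" "compose (carrier M) \<phi> q = \<phi>"
    using rickart_unit[OF RK \<phi> Nsub] by blast
  then show "\<exists>x\<in>lann R M N. \<phi> \<otimes>\<^bsub>End_ring R M\<^esub> x = \<phi>" by auto
qed

end

lemma part2: "centrally_endo_AIP R M \<Longrightarrow> endo_AIP R M"
  unfolding centrally_endo_AIP_def endo_AIP_def centrally_s_unital_ideal_def right_s_unital_ideal_def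
  by blast


context
  fixes R :: "'r ring" and M :: "('r,'m) module"
  assumes RM: "right_module R M"
begin

interpretation M: abelian_group M using RM unfolding right_module_def by blast

lemma ker_rsub:
  assumes \<phi>: "\<phi> \<in> End R M"
  shows "rsubmodule R {x\<in>carrier M. \<phi> x = \<zero>\<^bsub>M\<^esub>} M"
  unfolding rsubmodule_def
proof (intro conjI ballI)
  show "additive_subgroup {x \<in> carrier M. \<phi> x = \<zero>\<^bsub>M\<^esub>} M"
    by (rule add_subgroupI') (use \<phi> End_zero[OF RM \<phi>] End_add[OF RM \<phi>] End_neg[OF RM \<phi>] M.abelian_group_axioms in auto)
  fix a x assume "a \<in> carrier R" "x \<in> {x \<in> carrier M. \<phi> x = \<zero>\<^bsub>M\<^esub>}"
  then show "rsm M x a \<in> {x \<in> carrier M. \<phi> x = \<zero>\<^bsub>M\<^esub>}"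
    using \<phi> End_rsm[OF RM \<phi>] rsm_closed[OF RM] rsm_zero[OF RM] by auto
qed auto

lemma trivial_FI_centrally:
  assumes triv: "\<And>N. fully_invariant R N M \<Longrightarrow> N \<subseteq> {\<zero>\<^bsub>M\<^esub>} \<or> N = carrier M"
  shows "centrally_endo_AIP R M"
  unfolding centrally_endo_AIP_def centrally_s_unital_ideal_def
proof (intro allI impI conjI ballI)
  fix N assume FI: "fully_invariant R N M"
  show "ideal (lann R M N) (End_ring R M)" by (rule lann_ideal[OF RM FI])
  fix \<phi> assume \<phi>: "\<phi> \<in> lann R M N"
  have \<phi>E: "\<phi> \<in> End R M" using \<phi> by (simp add: lann_def)
  show "\<exists>z\<in>lann R M N. (\<forall>s\<in>carrier (End_ring R M). z \<otimes>\<^bsub>End_ring R M\<^esub> s = s \<otimes>\<^bsub>End_ring R M\<^esub> z)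
      \<and> \<phi> \<otimes>\<^bsub>End_ring R M\<^esub> z = \<phi>"
  proof (cases "N \<subseteq> {\<zero>\<^bsub>M\<^esub>}")
    case True
    let ?z = "\<lambda>x\<in>carrier M. x"
    have "?z \<in> lann R M N" using True End_id[OF RM] by (auto simp: lann_def)
    moreover have "\<forall>s\<in>End R M. compose (carrier M) ?z s = compose (carrier M) s ?z"
    proof
      fix s assume s: "s \<in> End R M"
      have "compose (carrier M) ?z s = s"
        by (rule Id_compose) (use s End_closed[OF RM] End_ext[OF RM] in auto)
      moreover have "compose (carrier M) s ?z = s"
        by (rule compose_Id) (use s End_ext[OF RM] in auto)
      ultimately show "compose (carrier M) ?z s = compose (carrier M) s ?z" by simp
    qed
    moreover have "compose (carrier M) \<phi> ?z = \<phi>" by (rule compose_Id) (use End_ext[OF RM \<phi>E] in auto)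
    ultimately show ?thesis by auto
  next
    case False
    then have NM: "N = carrier M" using triv[OF FI] by blast
    have \<phi>0: "\<phi> x = \<zero>\<^bsub>M\<^esub>" if "x \<in> carrier M" for x using \<phi> NM that by (auto simp: lann_def)
    have "\<forall>s\<in>End R M. compose (carrier M) \<phi> s = compose (carrier M) s \<phi>"
    proof
      fix s assume s: "s \<in> End R M"
      show "compose (carrier M) \<phi> s = compose (carrier M) s \<phi>"
        by (rule End_eqI[OF RM End_compose[OF RM \<phi>E s] End_compose[OF RM s \<phi>E]])
           (simp add: compose_eq \<phi>0 End_closed[OF RM s] End_zero[OF RM s])
    qed
    moreover have "compose (carrier M) \<phi> \<phi> = \<phi>"
      by (rule End_eqI[OF RM End_compose[OF RM \<phi>E \<phi>E] \<phi>E])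
         (simp add: compose_eq \<phi>0 End_closed[OF RM \<phi>E])
    ultimately show ?thesis using \<phi> by auto
  qed
qed

end

type_synonym tr = "bool \<times> bool \<times> bool"

definition txor :: "tr \<Rightarrow> tr \<Rightarrow> tr" where
  "txor t u = (fst t \<noteq> fst u, fst (snd t) \<noteq> fst (snd u), snd (snd t) \<noteq> snd (snd u))"
definition tmul :: "tr \<Rightarrow> tr \<Rightarrow> tr" where
  "tmul t u = (fst t \<and> fst u, (fst t \<and> fst (snd u)) \<noteq> (fst (snd t) \<and> snd (snd u)), snd (snd t) \<and> snd (snd u))"
definition tsc :: "tr \<Rightarrow> tr \<Rightarrow> tr" where
  "tsc v a = (if snd (snd a) then v else (False, False, False))"
definition enc :: "tr \<Rightarrow> real set" where
  "enc t = {x. (x = 0 \<and> fst t) \<or> (x = 1 \<and> fst (snd t)) \<or> (x = 2 \<and> snd (snd t))}"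
definition dec :: "real set \<Rightarrow> tr" where
  "dec A = (0 \<in> A, 1 \<in> A, 2 \<in> A)"

lemma dec_enc[simp]: "dec (enc t) = t" by (cases t) (auto simp: dec_def enc_def)
lemma enc_inj[simp]: "enc t = enc u \<longleftrightarrow> t = u" by (metis dec_enc)

lemma txor_assoc: "txor (txor t u) v = txor t (txor u v)" by (auto simp: prod_eq_iff txor_def)
lemma txor_comm: "txor t u = txor u t" by (auto simp: prod_eq_iff txor_def)
lemma txor_0[simp]: "txor (False,False,False) t = t" "txor t (False,False,False) = t" by (auto simp: prod_eq_iff txor_def)
lemma txor_self[simp]: "txor t t = (False,False,False)" by (auto simp: prod_eq_iff txor_def)
lemma txor_cancel[simp]: "txor (txor t u) u = t" by (auto simp: prod_eq_iff txor_def)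
lemma tmul_assoc: "tmul (tmul t u) v = tmul t (tmul u v)" by (auto simp: prod_eq_iff tmul_def)
lemma tmul_one[simp]: "tmul (True,False,True) t = t" "tmul t (True,False,True) = t" by (auto simp: prod_eq_iff tmul_def)
lemma tmul_ldistr: "tmul (txor t u) v = txor (tmul t v) (tmul u v)" by (auto simp: prod_eq_iff tmul_def txor_def)
lemma tmul_rdistr: "tmul v (txor t u) = txor (tmul v t) (tmul v u)" by (auto simp: prod_eq_iff tmul_def txor_def)
lemma tsc_add: "tsc (txor t u) a = txor (tsc t a) (tsc u a)" by (auto simp: prod_eq_iff tsc_def)
lemma tsc_ladd: "tsc t (txor a b) = txor (tsc t a) (tsc t b)" by (auto simp: prod_eq_iff tsc_def txor_def)
lemma tsc_mul: "tsc t (tmul a b) = tsc (tsc t a) b" by (auto simp: prod_eq_iff tsc_def tmul_def)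
lemma tsc_one[simp]: "tsc t (True,False,True) = t" by (auto simp: prod_eq_iff tsc_def)

definition TR :: "real set ring" where
  "TR = \<lparr>carrier = range enc, mult = \<lambda>A B. enc (tmul (dec A) (dec B)), one = enc (True, False, True),
     zero = enc (False, False, False), add = \<lambda>A B. enc (txor (dec A) (dec B))\<rparr>"

definition Ma :: "(real set, real set) module" where
  "Ma = \<lparr>carrier = range enc, mult = \<lambda>A B. enc (tmul (dec A) (dec B)), one = enc (True, False, True),
     zero = enc (False, False, False), add = \<lambda>A B. enc (txor (dec A) (dec B)),
     smult = \<lambda>a x. enc (tsc (dec x) (dec a))\<rparr>"

definition Mb :: "(real set, real set) module" where
  "Mb = \<lparr>carrier = range enc, mult = \<lambda>A B. enc (tmul (dec A) (dec B)), one = enc (True, False, True),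
     zero = enc (False, False, False), add = \<lambda>A B. enc (txor (dec A) (dec B)),
     smult = \<lambda>a x. enc (tmul (dec x) (dec a))\<rparr>"

lemma ex_inv: "x \<in> range enc \<Longrightarrow> \<exists>y\<in>range enc. enc (txor (dec y) (dec x)) = enc (False, False, False)"
  by (rule bexI[of _ x]) auto

lemma TR_ring: "ring TR"
  apply (rule ringI)
     apply (rule abelian_groupI)
          prefer 7 apply (rule monoidI)
  apply (simp_all add: TR_def ex_inv)
  apply (auto simp: txor_def tmul_def)
  done

lemma Ma_ag: "abelian_group Ma"
  apply (rule abelian_groupI)
  apply (simp_all add: Ma_def ex_inv)
  apply (auto simp: txor_def)
  done

lemma Mb_ag: "abelian_group Mb"
  apply (rule abelian_groupI)
  apply (simp_all add: Mb_def ex_inv)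
  apply (auto simp: txor_def)
  done

lemma Ma_rm: "right_module TR Ma"
  unfolding right_module_def using TR_ring Ma_ag
  by (auto simp: rsm_def Ma_def TR_def tsc_add tsc_ladd tsc_mul)

lemma Mb_rm: "right_module TR Mb"
  unfolding right_module_def using TR_ring Mb_ag
  by (auto simp: rsm_def Mb_def TR_def tmul_assoc tmul_ldistr tmul_rdistr)


lemma enc_dec[simp]: "x \<in> range enc \<Longrightarrow> enc (dec x) = x" by auto

lemma End_Ma:
  assumes g: "\<And>u v. g (txor u v) = txor (g u) (g v)"
  shows "(\<lambda>x\<in>range enc. enc (g (dec x))) \<in> End TR Ma"
proof -
  have g0: "g (False, False, False) = (False, False, False)"
    using g[of "(False, False, False)" "(False, False, False)"] by simp
  show ?thesis unfolding End_def
    by (auto simp: Ma_def TR_def rsm_def tsc_def g g0)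
qed

lemma Ma_FI:
  assumes FI: "fully_invariant TR N Ma"
  shows "N \<subseteq> {\<zero>\<^bsub>Ma\<^esub>} \<or> N = carrier Ma"
proof (cases "\<exists>x\<in>N. x \<noteq> \<zero>\<^bsub>Ma\<^esub>")
  case False then show ?thesis by blast
next
  case True
  have Nsub: "N \<subseteq> range enc" using FI unfolding fully_invariant_def rsubmodule_def Ma_def by auto
  have inv: "\<And>\<phi> x. \<phi> \<in> End TR Ma \<Longrightarrow> x \<in> N \<Longrightarrow> \<phi> x \<in> N"
    using FI unfolding fully_invariant_def by blast
  obtain x where x: "x \<in> N" "x \<noteq> \<zero>\<^bsub>Ma\<^esub>" using True by blast
  obtain t where t: "x = enc t" using x Nsub by auto
  have t0: "t \<noteq> (False, False, False)" using x t by (auto simp: Ma_def)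
  define f :: "tr \<Rightarrow> bool" where "f u = (if fst t then fst u else if fst (snd t) then fst (snd u) else snd (snd u))" for u
  have fadd: "f (txor u v) = (f u \<noteq> f v)" for u v by (auto simp: f_def txor_def)
  have ft: "f t" using t0 by (auto simp: f_def prod_eq_iff)
  have "range enc \<subseteq> N"
  proof
    fix v assume "v \<in> range enc"
    then obtain w where w: "v = enc w" by auto
    define g where "g u = (if f u then w else (False, False, False))" for u
    have gadd: "g (txor u u') = txor (g u) (g u')" for u u' by (auto simp: g_def fadd)
    have "(\<lambda>x\<in>range enc. enc (g (dec x))) x \<in> N" using inv[OF End_Ma[OF gadd] x(1)] .
    then show "v \<in> N" using t w ft by (simp add: g_def)
  qed
  then show ?thesis using Nsub by (auto simp: Ma_def)
qed

lemma Ma_centrally: "centrally_endo_AIP TR Ma"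
  by (rule trivial_FI_centrally[OF Ma_rm Ma_FI])

lemma Ma_not_abelian: "\<not> abelian_module TR Ma"
proof
  assume ab: "abelian_module TR Ma"
  define e where "e = (\<lambda>x\<in>range enc. enc ((\<lambda>u. (fst u, False, False)) (dec x)))"
  define s where "s = (\<lambda>x\<in>range enc. enc ((\<lambda>u. (fst (snd u), fst u, snd (snd u))) (dec x)))"
  have eE: "e \<in> End TR Ma" unfolding e_def by (rule End_Ma) (auto simp: txor_def)
  have sE: "s \<in> End TR Ma" unfolding s_def by (rule End_Ma) (auto simp: txor_def)
  have cM: "carrier Ma = range enc" by (simp add: Ma_def)
  have ee: "compose (carrier Ma) e e = e"
    by (rule ext) (simp add: cM compose_def e_def)
  have "compose (carrier Ma) e s = compose (carrier Ma) s e"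
    using ab eE sE ee unfolding abelian_module_def End_ring_simps by blast
  then have "compose (carrier Ma) e s (enc (False, True, False)) = compose (carrier Ma) s e (enc (False, True, False))"
    by simp
  then show False by (simp add: cM compose_def e_def s_def)
qed

lemma Mb_End_form:
  assumes \<phi>: "\<phi> \<in> End TR Mb" and x: "x \<in> range enc"
  shows "\<phi> x = enc (tmul (dec (\<phi> (enc (True, False, True)))) (dec x))"
proof -
  have "\<phi> (rsm Mb (enc (True, False, True)) x) = rsm Mb (\<phi> (enc (True, False, True))) x"
    by (rule End_rsm[OF Mb_rm \<phi>]) (use x in \<open>auto simp: TR_def Mb_def\<close>)
  moreover have "rsm Mb (enc (True, False, True)) x = x" using x by (auto simp: rsm_def Mb_def)
  ultimately show ?thesis by (simp add: rsm_def Mb_def)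
qed

lemma leftmul_End: "(\<lambda>x\<in>range enc. enc (tmul c (dec x))) \<in> End TR Mb"
  unfolding End_def by (auto simp: Mb_def TR_def rsm_def tmul_rdistr tmul_assoc)

lemma Mb_neg: "x \<in> range enc \<Longrightarrow> \<ominus>\<^bsub>Mb\<^esub> x = x"
  by (rule abelian_group.minus_equality[OF Mb_ag]) (auto simp: Mb_def)

definition Qf :: "tr \<Rightarrow> tr \<Rightarrow> bool" where
  "Qf c t = (if fst c then (if snd (snd c) then True else \<not> snd (snd t))
             else if c = (False, False, False) then t = (False, False, False)
             else (\<not> fst t \<and> \<not> fst (snd t)))"
definition prj :: "tr \<Rightarrow> tr \<Rightarrow> tr" where
  "prj c t = (if fst c then (if snd (snd c) then t else (fst t, fst (snd t) \<noteq> (fst (snd c) \<and> snd (snd t)), False))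
              else if c = (False, False, False) then (False, False, False) else (False, False, snd (snd t)))"

lemma Q0: "Qf c (False, False, False)" by (auto simp: Qf_def)
lemma Qadd: "Qf c t \<Longrightarrow> Qf c u \<Longrightarrow> Qf c (txor t u)" by (auto simp: Qf_def txor_def split: if_splits)
lemma Qmul: "Qf c t \<Longrightarrow> Qf c (tmul t r)" by (auto simp: Qf_def tmul_def split: if_splits)
lemma Qint: "tmul c t = (False, False, False) \<Longrightarrow> Qf c t \<Longrightarrow> t = (False, False, False)"
  by (cases c; cases t) (auto simp: Qf_def tmul_def split: if_splits)
lemma Pdec: "tmul c (txor t (prj c t)) = (False, False, False)"
  by (cases c; cases t) (auto simp: prj_def tmul_def txor_def)
lemma Qpr: "Qf c (prj c t)"
  by (cases c; cases t) (auto simp: Qf_def prj_def)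

lemma Mb_rickart: "rickart TR Mb"
  unfolding rickart_def
proof
  fix \<phi> assume \<phi>: "\<phi> \<in> End TR Mb"
  define c where "c = dec (\<phi> (enc (True, False, True)))"
  have form: "\<phi> x = enc (tmul c (dec x))" if "x \<in> range enc" for x
    using Mb_End_form[OF \<phi> that] by (simp add: c_def)
  have cM: "carrier Mb = range enc" by (simp add: Mb_def)
  define K where "K = enc ` {t. Qf c t}"
  have Ksub: "rsubmodule TR K Mb"
    unfolding rsubmodule_def
  proof (intro conjI ballI)
    show "K \<subseteq> carrier Mb" by (auto simp: K_def cM)
    show "additive_subgroup K Mb"
      by (rule add_subgroupI'[OF Mb_ag]) (auto simp: K_def Mb_def Q0 Qadd Mb_neg[simplified Mb_def])
    fix a x assume "a \<in> carrier TR" "x \<in> K"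
    then show "rsm Mb x a \<in> K" by (auto simp: K_def Mb_def TR_def rsm_def Qmul)
  qed
  let ?A = "{x \<in> carrier Mb. \<phi> x = \<zero>\<^bsub>Mb\<^esub>}"
  have A: "rsubmodule TR ?A Mb" by (rule ker_rsub[OF Mb_rm \<phi>])
  have AK: "?A \<inter> K = {\<zero>\<^bsub>Mb\<^esub>}"
  proof
    show "?A \<inter> K \<subseteq> {\<zero>\<^bsub>Mb\<^esub>}"
    proof
      fix x assume x: "x \<in> ?A \<inter> K"
      then obtain t where t: "x = enc t" "Qf c t" by (auto simp: K_def)
      have "tmul c t = (False, False, False)" using x t form[of x] by (auto simp: Mb_def)
      then have "t = (False, False, False)" using Qint t by blast
      then show "x \<in> {\<zero>\<^bsub>Mb\<^esub>}" using t by (simp add: Mb_def)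
    qed
    show "{\<zero>\<^bsub>Mb\<^esub>} \<subseteq> ?A \<inter> K"
      using form[of "enc (False, False, False)"] Q0
      by (auto simp: K_def Mb_def tmul_def)
  qed
  have sum: "carrier Mb = {x \<oplus>\<^bsub>Mb\<^esub> y | x y. x \<in> ?A \<and> y \<in> K}"
  proof
    show "carrier Mb \<subseteq> {x \<oplus>\<^bsub>Mb\<^esub> y | x y. x \<in> ?A \<and> y \<in> K}"
    proof
      fix x assume "x \<in> carrier Mb"
      then obtain t where t: "x = enc t" by (auto simp: cM)
      have "enc (txor t (prj c t)) \<in> ?A" using form[of "enc (txor t (prj c t))"] Pdec by (auto simp: Mb_def)
      moreover have "enc (prj c t) \<in> K" using Qpr by (auto simp: K_def)
      moreover have "x = enc (txor t (prj c t)) \<oplus>\<^bsub>Mb\<^esub> enc (prj c t)" using t by (simp add: Mb_def)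
      ultimately show "x \<in> {x \<oplus>\<^bsub>Mb\<^esub> y | x y. x \<in> ?A \<and> y \<in> K}" by blast
    qed
    show "{x \<oplus>\<^bsub>Mb\<^esub> y | x y. x \<in> ?A \<and> y \<in> K} \<subseteq> carrier Mb"
      by (auto simp: Mb_def)
  qed
  show "direct_summand TR ?A Mb"
    unfolding direct_summand_def using A Ksub AK sum by blast
qed

lemma Mb_endo: "endo_AIP TR Mb"
  by (rule rickart_endo_AIP[OF Mb_rm Mb_rickart])

lemma Mb_not_centrally: "\<not> centrally_endo_AIP TR Mb"
proof
  assume ce: "centrally_endo_AIP TR Mb"
  define N where "N = enc ` {t. \<not> snd (snd t)}"
  have cM: "carrier Mb = range enc" by (simp add: Mb_def)
  have FI: "fully_invariant TR N Mb"
    unfolding fully_invariant_def rsubmodule_def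
  proof (intro conjI ballI)
    show "N \<subseteq> carrier Mb" by (auto simp: N_def cM)
    have negN: "\<And>x. x \<in> N \<Longrightarrow> \<ominus>\<^bsub>Mb\<^esub> x \<in> N" using Mb_neg by (auto simp: N_def)
    show "additive_subgroup N Mb"
      by (rule add_subgroupI'[OF Mb_ag _ _ _ negN]) (auto simp: N_def Mb_def txor_def)
    fix a x assume "a \<in> carrier TR" "x \<in> N"
    then show "rsm Mb x a \<in> N" by (auto simp: N_def Mb_def TR_def rsm_def tmul_def)
  next
    fix \<phi> assume \<phi>: "\<phi> \<in> End TR Mb"
    show "\<phi> ` N \<subseteq> N"
    proof
      fix y assume "y \<in> \<phi> ` N"
      then obtain t where t: "y = \<phi> (enc t)" "\<not> snd (snd t)" by (auto simp: N_def)
      show "y \<in> N" using t Mb_End_form[OF \<phi>, of "enc t"] by (auto simp: N_def tmul_def)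
    qed
  qed
  define \<phi>0 where "\<phi>0 = (\<lambda>x\<in>range enc. enc (tmul (False, False, True) (dec x)))"
  define s where "s = (\<lambda>x\<in>range enc. enc (tmul (False, True, False) (dec x)))"
  have \<phi>0E: "\<phi>0 \<in> End TR Mb" unfolding \<phi>0_def by (rule leftmul_End)
  have sE: "s \<in> End TR Mb" unfolding s_def by (rule leftmul_End)
  have \<phi>0N: "\<phi>0 \<in> lann TR Mb N" using \<phi>0E by (auto simp: lann_def N_def \<phi>0_def Mb_def tmul_def)
  from ce FI have "centrally_s_unital_ideal (lann TR Mb N) (End_ring TR Mb)"
    unfolding centrally_endo_AIP_def by blast
  then obtain z where z: "z \<in> lann TR Mb N"
    and zc: "\<forall>s\<in>End TR Mb. compose (carrier Mb) z s = compose (carrier Mb) s z"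
    and zu: "compose (carrier Mb) \<phi>0 z = \<phi>0"
    using \<phi>0N unfolding centrally_s_unital_ideal_def by auto
  have zE: "z \<in> End TR Mb" using z by (simp add: lann_def)
  define c where "c = dec (z (enc (True, False, True)))"
  have zform: "z x = enc (tmul c (dec x))" if "x \<in> range enc" for x
    using Mb_End_form[OF zE that] by (simp add: c_def)
  have "z (enc (True, False, False)) = \<zero>\<^bsub>Mb\<^esub>" using z by (auto simp: lann_def N_def)
  then have c1: "tmul c (True, False, False) = (False, False, False)"
    using zform[of "enc (True, False, False)"] by (simp add: Mb_def)
  have "compose (carrier Mb) \<phi>0 z (enc (True, False, True)) = \<phi>0 (enc (True, False, True))"
    using zu by simp
  then have c2: "tmul (False, False, True) c = (False, False, True)"
    using zform by (simp add: cM compose_def \<phi>0_def tmul_def)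
  have "compose (carrier Mb) z s (enc (True, False, True)) = compose (carrier Mb) s z (enc (True, False, True))"
    using zc sE by simp
  then have c3: "tmul c (False, True, False) = tmul (False, True, False) c"
    using zform by (simp add: cM compose_def s_def tmul_def)
  show False using c1 c2 c3 by (cases c) (auto simp: tmul_def)
qed


theorem proposition2p2:
  fixes R :: "'r ring" and M :: "('r, 'm) module"
  assumes "right_module R M"
  shows "(abelian_module R M \<and> rickart R M \<longrightarrow> centrally_endo_AIP R M)
       \<and> (centrally_endo_AIP R M \<longrightarrow> endo_AIP R M)
       \<and> (\<exists>(R' :: real set ring) (M' :: (real set, real set) module).
            right_module R' M' \<and> centrally_endo_AIP R' M' \<and>
            \<not> (abelian_module R' M' \<and> rickart R' M'))
       \<and> (\<exists>(R' :: real set ring) (M' :: (real set, real set) module).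
            right_module R' M' \<and> endo_AIP R' M' \<and> \<not> centrally_endo_AIP R' M')"
  using part1[OF assms] part2 Ma_rm Ma_centrally Ma_not_abelian Mb_rm Mb_endo Mb_not_centrally
  by blast

end
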